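(* Let $\mathbb{F}$ be a field of characteristic zero, $d\ge 2$, $n\ge 0$ an integer, and let $a_{k,j}\in\mathbb{F}$ ($2\le k\le n$, $2\le j\le d$) be arbitrary. Let $L_0,\dots,L_n\in\mathbb{F}[x_1,\dots,x_d]$ be defined recursively by $L_0=1$, $L_1=x_1$ and, for $2\le k\le n$, $$L_k=\Psi_1(M_1)+\Psi_2\big((M_2)_{i_1=0}\big)+\dots+\Psi_d\big((M_d)_{i_1=\dots=i_{d-1}=0}\big)+a_{k,2}x_2+\dots+a_{k,d}x_d,$$ where $M_1=L_{k-1}$ and $M_j=\sum_{t=2}^{k-1}a_{t,j}L_{k-t}$ for $2\le j\le d$. Define $$q^*_{n,m}=\sum \frac{a_{2,2}^{\gamma_{2,2}}\cdots a_{n,2}^{\gamma_{2,n}}\cdots a_{2,d}^{\gamma_{d,2}}\cdots a_{n,d}^{\gamma_{d,n}}}{\gamma_{1,1}!\,\gamma_{2,2}!\cdots\gamma_{2,n}!\cdots\gamma_{d,2}!\cdots\gamma_{d,n}!}\,x_1^{\gamma_{1,1}}\,x_2^{\gamma_{2,2}+\dots+\gamma_{2,n}}\cdots x_d^{\gamma_{d,2}+\dots+\gamma_{d,n}},$$ the sum running over all nonnegative integers $\gamma_{1,1}$ and $\gamma_{s,j}$ ($2\le s\le d$, $2\le j\le n$) with $$\gamma_{1,1}+2(\gamma_{2,2}+\dots+\gamma_{d,2})+\dots+n(\gamma_{2,n}+\dots+\gamma_{d,n})=m.$$ Then $q^*_{n,m}=L_m$ for all $m=0,1,\dots,n$.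
   Context: $\Psi_j$ is the $\mathbb{F}$-linear operator on $\mathbb{F}[x_1,\dots,x_d]$ given on monomials by $\Psi_j(x_1^{\alpha_1}\cdots x_d^{\alpha_d})=\frac{1}{\alpha_j+1}x_1^{\alpha_1}\cdots x_j^{\alpha_j+1}\cdots x_d^{\alpha_d}$. For a polynomial $M$, $(M)_{i_1=\dots=i_{j-1}=0}$ denotes the polynomial consisting of those terms of $M$ that contain none of the variables $x_1,\dots,x_{j-1}$. The convention $0^0=1$ is used. ($q^*_{n,m}$ is the specialization of the polynomial $q_{n,m}=\sum_{\tau=m}\frac{\mathbf c_1^{\pmb\gamma_1}\cdots\mathbf c_d^{\pmb\gamma_d}}{\pmb\gamma_1!\cdots\pmb\gamma_d!}x_1^{|\pmb\gamma_1|}\cdots x_d^{|\pmb\gamma_d|}$, $\tau=\sum_j b_j\sum_i\gamma_{i,j}$, to $\mathbf b=(1,2,\dots,n)$, $\mathbf c_1=(1,0,\dots,0)$, $\mathbf c_s=(0,a_{2,s},\dots,a_{n,s})$.) *)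

theory Defs
  imports Main "HOL-Library.Poly_Mapping"
begin

text \<open>A polynomial in F[x_1,...,x_d] is represented by its coefficient function:
  exponent vectors are finitely supported maps nat =>0 nat (variable x_i has index i).\<close>

type_synonym 'a cpoly = "(nat \<Rightarrow>\<^sub>0 nat) \<Rightarrow> 'a"

definition pconst :: "'a::zero \<Rightarrow> 'a cpoly" where
  "pconst c = (\<lambda>\<alpha>. if \<alpha> = 0 then c else 0)"

definition pvar :: "nat \<Rightarrow> 'a::{zero,one} cpoly" where
  "pvar i = (\<lambda>\<alpha>. if \<alpha> = Poly_Mapping.single i 1 then 1 else 0)"

text \<open>Psi_j (x^alpha) = x^(alpha + e_j) / (alpha_j + 1), extended linearly.\<close>
definition Psi :: "nat \<Rightarrow> 'a::field cpoly \<Rightarrow> 'a cpoly" where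
  "Psi j M = (\<lambda>\<beta>. if 0 < Poly_Mapping.lookup \<beta> j
                    then M (\<beta> - Poly_Mapping.single j 1) / of_nat (Poly_Mapping.lookup \<beta> j) else 0)"

text \<open>(M)_{i_1=...=i_{j-1}=0}: the terms of M containing none of x_1,...,x_{j-1}.\<close>
definition restr :: "nat \<Rightarrow> 'a::zero cpoly \<Rightarrow> 'a cpoly" where
  "restr j M = (\<lambda>\<alpha>. if (\<forall>i\<in>{1..<j}. Poly_Mapping.lookup \<alpha> i = 0) then M \<alpha> else 0)"

text \<open>The polynomial M_j in step k, given the list Ls = [L_0,...,L_{k-1}].\<close>
definition Mpoly :: "(nat \<Rightarrow> nat \<Rightarrow> 'a::field) \<Rightarrow> nat \<Rightarrow> nat \<Rightarrow> 'a cpoly list \<Rightarrow> 'a cpoly" where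
  "Mpoly a k j Ls = (if j = 1 then Ls ! (k - 1)
      else (\<lambda>\<alpha>. \<Sum>t\<in>{2..k-1}. a t j * (Ls ! (k - t)) \<alpha>))"

definition Lstep :: "(nat \<Rightarrow> nat \<Rightarrow> 'a::field) \<Rightarrow> nat \<Rightarrow> nat \<Rightarrow> 'a cpoly list \<Rightarrow> 'a cpoly" where
  "Lstep a d k Ls = (\<lambda>\<alpha>. (\<Sum>j\<in>{1..d}. Psi j (restr j (Mpoly a k j Ls)) \<alpha>)
                        + (\<Sum>j\<in>{2..d}. a k j * pvar j \<alpha>))"

primrec Lseq :: "(nat \<Rightarrow> nat \<Rightarrow> 'a::field) \<Rightarrow> nat \<Rightarrow> nat \<Rightarrow> 'a cpoly list" where
  "Lseq a d 0 = [pconst 1]"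
| "Lseq a d (Suc k) = Lseq a d k @
     [if k = 0 then pvar 1 else Lstep a d (Suc k) (Lseq a d k)]"

definition Lpoly :: "(nat \<Rightarrow> nat \<Rightarrow> 'a::field) \<Rightarrow> nat \<Rightarrow> nat \<Rightarrow> 'a cpoly" where
  "Lpoly a d k = Lseq a d k ! k"

text \<open>Index set of the sum defining q*_{n,m}: pairs (g11, g) with g s j = gamma_{s,j}
  for 2 <= s <= d, 2 <= j <= n (and g = 0 elsewhere).\<close>
definition Gset :: "nat \<Rightarrow> nat \<Rightarrow> nat \<Rightarrow> (nat \<times> (nat \<Rightarrow> nat \<Rightarrow> nat)) set" where
  "Gset d n m = {(g1, g). g1 + (\<Sum>j\<in>{2..n}. j * (\<Sum>s\<in>{2..d}. g s j)) = m
                   \<and> (\<forall>s j. (s \<notin> {2..d} \<or> j \<notin> {2..n}) \<longrightarrow> g s j = 0)}"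

definition qcoef :: "(nat \<Rightarrow> nat \<Rightarrow> 'a::field) \<Rightarrow> nat \<Rightarrow> nat \<Rightarrow> nat \<times> (nat \<Rightarrow> nat \<Rightarrow> nat) \<Rightarrow> 'a" where
  "qcoef a d n \<gamma> = (case \<gamma> of (g1, g) \<Rightarrow>
     (\<Prod>s\<in>{2..d}. \<Prod>j\<in>{2..n}. a j s ^ g s j)
     / of_nat (fact g1 * (\<Prod>s\<in>{2..d}. \<Prod>j\<in>{2..n}. fact (g s j))))"

definition qexp :: "nat \<Rightarrow> nat \<Rightarrow> nat \<times> (nat \<Rightarrow> nat \<Rightarrow> nat) \<Rightarrow> (nat \<Rightarrow>\<^sub>0 nat)" where
  "qexp d n \<gamma> = (case \<gamma> of (g1, g) \<Rightarrow>
     Poly_Mapping.single 1 g1 + (\<Sum>s\<in>{2..d}. Poly_Mapping.single s (\<Sum>j\<in>{2..n}. g s j)))"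

definition qstar :: "(nat \<Rightarrow> nat \<Rightarrow> 'a::field) \<Rightarrow> nat \<Rightarrow> nat \<Rightarrow> nat \<Rightarrow> 'a cpoly" where
  "qstar a d n m = (\<lambda>\<alpha>. \<Sum>\<gamma>\<in>{\<gamma> \<in> Gset d n m. qexp d n \<gamma> = \<alpha>}. qcoef a d n \<gamma>)"

end

theory Submission
  imports Defs
begin

lemma lookup_qexp: "Poly_Mapping.lookup (qexp d n (g1,g)) i =
  (if i = 1 then g1 else if i \<in> {2..d} then (\<Sum>j\<in>{2..n}. g i j) else 0)"
  by (auto simp: qexp_def lookup_add lookup_sum lookup_single when_def)

lemma lm: "Poly_Mapping.lookup (\<beta> - Poly_Mapping.single j (v::nat)) i = Poly_Mapping.lookup \<beta> i - (if i = j then v else 0)"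
  by (simp add: lookup_minus lookup_single when_def)

lemma prod_upd:
  fixes F :: "nat \<Rightarrow> nat \<Rightarrow> nat \<Rightarrow> 'b::comm_monoid_mult"
  assumes "finite A" "finite B" "s \<in> A" "t \<in> B"
  shows "\<exists>R. (\<Prod>x\<in>A. \<Prod>y\<in>B. F x y ((g(s:=(g s)(t:=v))) x y)) = F s t v * R
            \<and> (\<Prod>x\<in>A. \<Prod>y\<in>B. F x y (g x y)) = F s t (g s t) * R"
proof -
  let ?h = "g(s:=(g s)(t:=v))"
  have c1: "(\<Prod>x\<in>A. \<Prod>y\<in>B. F x y (?h x y)) = (\<Prod>p\<in>A\<times>B. F (fst p) (snd p) (?h (fst p) (snd p)))"
    by (simp add: prod.cartesian_product case_prod_beta)
  have c2: "(\<Prod>x\<in>A. \<Prod>y\<in>B. F x y (g x y)) = (\<Prod>p\<in>A\<times>B. F (fst p) (snd p) (g (fst p) (snd p)))"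
    by (simp add: prod.cartesian_product case_prod_beta)
  have st: "(s,t) \<in> A \<times> B" using assms by auto
  have f: "finite (A \<times> B)" using assms by auto
  let ?R = "\<Prod>p\<in>A\<times>B - {(s,t)}. F (fst p) (snd p) (g (fst p) (snd p))"
  have "(\<Prod>x\<in>A. \<Prod>y\<in>B. F x y (?h x y)) = (\<Prod>p\<in>A\<times>B. F (fst p) (snd p) (?h (fst p) (snd p)))" by (rule c1)
  also have "\<dots> = F s t v * (\<Prod>p\<in>A\<times>B - {(s,t)}. F (fst p) (snd p) (?h (fst p) (snd p)))"
    by (subst prod.remove[OF f st]) simp
  also have "(\<Prod>p\<in>A\<times>B - {(s,t)}. F (fst p) (snd p) (?h (fst p) (snd p))) = ?R"
    by (rule prod.cong) auto
  finally have 1: "(\<Prod>x\<in>A. \<Prod>y\<in>B. F x y (?h x y)) = F s t v * ?R" .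
  have 2: "(\<Prod>x\<in>A. \<Prod>y\<in>B. F x y (g x y)) = F s t (g s t) * ?R"
    unfolding c2 by (subst prod.remove[OF f st]) simp
  show ?thesis using 1 2 by blast
qed

lemma finite_G: "finite (Gset d n m)"
proof -
  let ?A = "{2..d} \<times> {2..n}"
  let ?F = "{f::nat\<times>nat\<Rightarrow>nat. \<forall>x. (x \<in> ?A \<longrightarrow> f x \<in> {0..m}) \<and> (x \<notin> ?A \<longrightarrow> f x = 0)}"
  have fF: "finite ?F" by (rule finite_set_of_finite_funs) auto
  have "Gset d n m \<subseteq> {0..m} \<times> (curry ` ?F)"
  proof
    fix x assume x: "x \<in> Gset d n m"
    obtain g1 g where xe: "x = (g1, g)" by (cases x)
    have e: "g1 + (\<Sum>j\<in>{2..n}. j * (\<Sum>s\<in>{2..d}. g s j)) = m"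
      and z: "\<And>s j. (s \<notin> {2..d} \<or> j \<notin> {2..n}) \<Longrightarrow> g s j = 0"
      using x xe by (auto simp: Gset_def)
    have b: "g s j \<le> m" if "s \<in> {2..d}" "j \<in> {2..n}" for s j
    proof -
      have "g s j \<le> (\<Sum>s\<in>{2..d}. g s j)" using that by (intro member_le_sum) auto
      also have "\<dots> \<le> j * (\<Sum>s\<in>{2..d}. g s j)" using that by simp
      also have "\<dots> \<le> (\<Sum>j\<in>{2..n}. j * (\<Sum>s\<in>{2..d}. g s j))"
        using that by (intro member_le_sum) auto
      finally show ?thesis using e by linarith
    qed
    have "g = curry (case_prod g)" by simp
    moreover have "case_prod g \<in> ?F" using b z by auto
    ultimately have "g \<in> curry ` ?F" by blast
    moreover have "g1 \<le> m" using e by linarith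
    ultimately show "x \<in> {0..m} \<times> (curry ` ?F)" using xe by auto
  qed
  moreover have "finite ({0..m} \<times> (curry ` ?F))" using fF by auto
  ultimately show ?thesis by (rule finite_subset)
qed


definition wt :: "nat \<Rightarrow> nat \<Rightarrow> nat \<Rightarrow> (nat \<Rightarrow> nat \<Rightarrow> nat) \<Rightarrow> nat" where
  "wt d n g1 g = g1 + (\<Sum>j\<in>{2..n}. j * (\<Sum>s\<in>{2..d}. g s j))"

lemma Gset_iff: "(g1, g) \<in> Gset d n m \<longleftrightarrow> wt d n g1 g = m \<and> (\<forall>s j. (s \<notin> {2..d} \<or> j \<notin> {2..n}) \<longrightarrow> g s j = 0)"
  by (simp add: Gset_def wt_def)

lemma wt_inc:
  assumes "s \<in> {2..d}" "t \<in> {2..n}"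
  shows "wt d n k (g(s:=(g s)(t:=g s t + 1))) = wt d n k g + t"
proof -
  have e: "(\<Sum>s'\<in>{2..d}. (g(s:=(g s)(t:=g s t + 1))) s' j) = (\<Sum>s'\<in>{2..d}. g s' j) + (if j = t then 1 else 0)" for j
  proof -
    have "(\<Sum>s'\<in>{2..d}. (g(s:=(g s)(t:=g s t + 1))) s' j) = (\<Sum>s'\<in>{2..d}. g s' j + (if s' = s \<and> j = t then 1 else 0))"
      by (rule sum.cong) auto
    also have "\<dots> = (\<Sum>s'\<in>{2..d}. g s' j) + (\<Sum>s'\<in>{2..d}. (if s' = s \<and> j = t then 1 else 0))"
      by (rule sum.distrib)
    also have "(\<Sum>s'\<in>{2..d}. (if s' = s \<and> j = t then 1 else 0)) = (if j = t then (1::nat) else 0)"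
      using assms(1) by (cases "j = t") (auto simp: sum.delta)
    finally show ?thesis .
  qed
  have "(\<Sum>j\<in>{2..n}. j * (\<Sum>s'\<in>{2..d}. (g(s:=(g s)(t:=g s t + 1))) s' j))
      = (\<Sum>j\<in>{2..n}. j * (\<Sum>s'\<in>{2..d}. g s' j) + (if j = t then t else 0))"
    by (rule sum.cong[OF refl], subst e, simp add: algebra_simps)
  also have "\<dots> = (\<Sum>j\<in>{2..n}. j * (\<Sum>s'\<in>{2..d}. g s' j)) + t"
    using assms(2) by (simp add: sum.distrib sum.delta)
  finally show ?thesis by (simp add: wt_def)
qed

lemma qexp_inc:
  assumes "s \<in> {2..d}" "t \<in> {2..n}"
  shows "Poly_Mapping.lookup (qexp d n (k, g(s:=(g s)(t:=g s t + 1)))) i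
     = Poly_Mapping.lookup (qexp d n (k, g)) i + (if i = s then 1 else 0)"
proof -
  have "(\<Sum>j\<in>{2..n}. (g(s:=(g s)(t:=g s t + 1))) i j) = (\<Sum>j\<in>{2..n}. g i j + (if i = s \<and> j = t then 1 else 0))"
    by (rule sum.cong) auto
  also have "\<dots> = (\<Sum>j\<in>{2..n}. g i j) + (if i = s then 1 else 0)"
    using assms(2) by (simp add: sum.distrib sum.delta)
  finally show ?thesis using assms(1) by (auto simp: lookup_qexp)
qed

lemma pm_eq_iff: "(p = q) \<longleftrightarrow> (\<forall>i. Poly_Mapping.lookup p i = Poly_Mapping.lookup q i)"
  using poly_mapping_eqI by auto

lemma Fpos: "(0::nat) < (\<Prod>s\<in>{2..d}. \<Prod>j\<in>{2..n}. fact (g s j))"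
  by (intro prod_pos) auto

lemma coef1: "of_nat (Suc k) * qcoef a d n (Suc k, g) = (qcoef a d n (k, g) :: 'a::field_char_0)"
proof -
  let ?P = "(\<Prod>s\<in>{2..d}. \<Prod>j\<in>{2..n}. a j s ^ g s j)"
  let ?F = "(\<Prod>s\<in>{2..d}. \<Prod>j\<in>{2..n}. fact (g s j)) :: nat"
  have e: "fact (Suc k) * ?F = Suc k * (fact k * ?F)" by (metis fact_Suc mult.assoc of_nat_id)
  have "qcoef a d n (Suc k, g) = ?P / (of_nat (Suc k) * of_nat (fact k * ?F))"
    unfolding qcoef_def by (simp add: fact_Suc mult.assoc del: of_nat_prod)
  moreover have "qcoef a d n (k, g) = ?P / of_nat (fact k * ?F)"
    unfolding qcoef_def by simp
  moreover have "of_nat (Suc k) \<noteq> (0::'a)" by (rule of_nat_neq_0)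
  ultimately show ?thesis by simp
qed

lemma id1:
  fixes a :: "nat \<Rightarrow> nat \<Rightarrow> 'a::field_char_0"
  assumes b1: "0 < Poly_Mapping.lookup \<beta> 1" and m1: "1 \<le> m"
  shows "of_nat (Poly_Mapping.lookup \<beta> 1) * qstar a d n m \<beta>
       = qstar a d n (m-1) (\<beta> - Poly_Mapping.single 1 1)"
proof -
  let ?S = "{\<gamma> \<in> Gset d n m. qexp d n \<gamma> = \<beta>}"
  let ?S' = "{\<gamma> \<in> Gset d n (m-1). qexp d n \<gamma> = \<beta> - Poly_Mapping.single 1 1}"
  have "(\<Sum>\<gamma>\<in>?S'. qcoef a d n \<gamma>) = (\<Sum>\<gamma>\<in>?S. of_nat (Poly_Mapping.lookup \<beta> 1) * qcoef a d n \<gamma>)"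
  proof (rule sum.reindex_bij_witness[where i="\<lambda>(g1,g). (g1-1,g)" and j="\<lambda>(g1,g). (Suc g1,g)"])
    fix x assume "x \<in> ?S'"
    then obtain g1 g where x: "x = (g1,g)" "wt d n g1 g = m - 1"
      "\<forall>s j. (s \<notin> {2..d} \<or> j \<notin> {2..n}) \<longrightarrow> g s j = 0"
      "qexp d n (g1,g) = \<beta> - Poly_Mapping.single 1 1"
      by (cases x) (auto simp: Gset_iff)
    have x4: "Poly_Mapping.lookup (qexp d n (g1,g)) i = Poly_Mapping.lookup \<beta> i - (if i = 1 then 1 else 0)" for i
      unfolding x(4) by (rule lm)
    show "(case case x of (g1, g) \<Rightarrow> (Suc g1, g) of (g1, g) \<Rightarrow> (g1 - 1, g)) = x" using x(1) by simp
    have "wt d n (Suc g1) g = m" using x(2) m1 by (simp add: wt_def)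
    moreover have "qexp d n (Suc g1, g) = \<beta>"
    proof (rule poly_mapping_eqI)
      fix i show "Poly_Mapping.lookup (qexp d n (Suc g1, g)) i = Poly_Mapping.lookup \<beta> i"
      proof (cases "i = 1")
        case True then show ?thesis using x4[of 1] b1 by (simp add: lookup_qexp)
      next
        case False
        have "Poly_Mapping.lookup (qexp d n (Suc g1, g)) i = Poly_Mapping.lookup (qexp d n (g1, g)) i"
          using False by (simp add: lookup_qexp)
        then show ?thesis using x4[of i] False by simp
      qed
    qed
    ultimately show "(case x of (g1, g) \<Rightarrow> (Suc g1, g)) \<in> ?S" using x(1,3) by (simp add: Gset_iff)
    have "g1 = Poly_Mapping.lookup \<beta> 1 - 1" using x4[of 1] by (simp add: lookup_qexp)
    then show "of_nat (Poly_Mapping.lookup \<beta> 1) * qcoef a d n (case x of (g1, g) \<Rightarrow> (Suc g1, g)) = qcoef a d n x"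
      using coef1[where k=g1 and a=a and d=d and n=n and g=g] x(1) b1 by simp
  next
    fix x assume "x \<in> ?S"
    then obtain g1 g where x: "x = (g1,g)" "wt d n g1 g = m"
      "\<forall>s j. (s \<notin> {2..d} \<or> j \<notin> {2..n}) \<longrightarrow> g s j = 0"
      "\<forall>i. Poly_Mapping.lookup (qexp d n (g1,g)) i = Poly_Mapping.lookup \<beta> i"
      by (cases x) (auto simp: Gset_iff pm_eq_iff)
    have g1: "g1 = Poly_Mapping.lookup \<beta> 1" using x(4)[rule_format, of 1] by (simp add: lookup_qexp)
    with b1 have g1p: "0 < g1" by simp
    show "(case case x of (g1, g) \<Rightarrow> (g1 - 1, g) of (g1, g) \<Rightarrow> (Suc g1, g)) = x" using x(1) g1p by simp
    have "wt d n (g1 - 1) g = m - 1" using x(2) g1p by (simp add: wt_def)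
    moreover have "qexp d n (g1 - 1, g) = \<beta> - Poly_Mapping.single 1 1"
    proof (rule poly_mapping_eqI)
      fix i show "Poly_Mapping.lookup (qexp d n (g1 - 1, g)) i = Poly_Mapping.lookup (\<beta> - Poly_Mapping.single 1 1) i"
      proof (cases "i = 1")
        case True then show ?thesis using g1 by (simp add: lookup_qexp lm)
      next
        case False
        have "Poly_Mapping.lookup (qexp d n (g1 - 1, g)) i = Poly_Mapping.lookup (qexp d n (g1, g)) i"
          using False by (simp add: lookup_qexp)
        then show ?thesis using x(4)[rule_format, of i] False by (simp add: lm)
      qed
    qed
    ultimately show "(case x of (g1, g) \<Rightarrow> (g1 - 1, g)) \<in> ?S'" using x(1,3) by (simp add: Gset_iff)
  qed
  then show ?thesis by (simp add: qstar_def sum_distrib_left)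
qed

lemma coef2:
  fixes a :: "nat \<Rightarrow> nat \<Rightarrow> 'a::field_char_0"
  assumes s: "s \<in> {2..d}" and t: "t \<in> {2..n}"
  shows "of_nat (Suc (g s t)) * qcoef a d n (k, g(s:=(g s)(t:=Suc (g s t)))) = a t s * qcoef a d n (k, g)"
proof -
  let ?c = "g s t"
  let ?h = "g(s:=(g s)(t:=Suc (g s t)))"
  obtain R1 where R1: "(\<Prod>x\<in>{2..d}. \<Prod>y\<in>{2..n}. a y x ^ ?h x y) = a t s ^ Suc ?c * R1"
     "(\<Prod>x\<in>{2..d}. \<Prod>y\<in>{2..n}. a y x ^ g x y) = a t s ^ ?c * R1"
    using prod_upd[where F="\<lambda>x y v. a y x ^ v" and A="{2..d}" and B="{2..n}" and s=s and t=t and g=g and v="Suc ?c"] s t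
    by auto
  obtain R2 where R2: "(\<Prod>x\<in>{2..d}. \<Prod>y\<in>{2..n}. fact (?h x y)) = (fact (Suc ?c) :: nat) * R2"
     "(\<Prod>x\<in>{2..d}. \<Prod>y\<in>{2..n}. fact (g x y)) = (fact ?c :: nat) * R2"
    using prod_upd[where F="\<lambda>x y v. fact v :: nat" and A="{2..d}" and B="{2..n}" and s=s and t=t and g=g and v="Suc ?c"] s t
    by auto
  have ne: "fact k * (fact (Suc ?c) * R2) = Suc ?c * (fact k * (fact ?c * R2))"
  proof -
    have fs: "(fact (Suc ?c)::nat) = Suc ?c * fact ?c" by (simp only: fact_Suc of_nat_id)
    show ?thesis unfolding fs by (simp only: mult.assoc mult.left_commute)
  qed
  have q1: "qcoef a d n (k, ?h) = (a t s * (a t s ^ ?c * R1)) / (of_nat (Suc ?c) * of_nat (fact k * (fact ?c * R2)))"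
    unfolding qcoef_def prod.case R1(1) R2(1) ne of_nat_mult[of "Suc ?c"] by simp
  have q2: "qcoef a d n (k, g) = (a t s ^ ?c * R1) / of_nat (fact k * (fact ?c * R2))"
    unfolding qcoef_def prod.case R1(2) R2(2) by simp
  have nz: "of_nat (Suc ?c) \<noteq> (0::'a)" by (rule of_nat_neq_0)
  show ?thesis unfolding q1 q2 times_divide_eq_right by (rule mult_divide_mult_cancel_left[OF nz])
qed

lemma wt_ge:
  assumes "(g1, g) \<in> Gset d n m" "s \<in> {2..d}" "t \<in> {2..n}"
  shows "t * g s t \<le> m"
proof -
  have e: "wt d n g1 g = m" using assms(1) by (simp add: Gset_iff)
  have "t * g s t \<le> t * (\<Sum>s\<in>{2..d}. g s t)" using assms by (intro mult_le_mono2 member_le_sum) auto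
  also have "\<dots> \<le> (\<Sum>j\<in>{2..n}. j * (\<Sum>s\<in>{2..d}. g s j))"
    using assms(3) by (intro member_le_sum[where f="\<lambda>j. j * (\<Sum>s\<in>{2..d}. g s j)"]) auto
  finally show ?thesis using e by (simp add: wt_def)
qed

lemma id2t:
  fixes a :: "nat \<Rightarrow> nat \<Rightarrow> 'a::field_char_0"
  assumes s: "s \<in> {2..d}" and t: "t \<in> {2..n}" and bs: "0 < Poly_Mapping.lookup \<beta> s" and tm: "t \<le> m"
  shows "(\<Sum>\<gamma>\<in>{\<gamma> \<in> Gset d n m. qexp d n \<gamma> = \<beta>}. of_nat (snd \<gamma> s t) * qcoef a d n \<gamma>)
       = a t s * qstar a d n (m-t) (\<beta> - Poly_Mapping.single s 1)"
proof -
  let ?S = "{\<gamma> \<in> Gset d n m. qexp d n \<gamma> = \<beta>}"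
  let ?T = "{\<gamma> \<in> ?S. 0 < snd \<gamma> s t}"
  let ?S' = "{\<gamma> \<in> Gset d n (m-t). qexp d n \<gamma> = \<beta> - Poly_Mapping.single s 1}"
  let ?inc = "\<lambda>(g1::nat, g::nat\<Rightarrow>nat\<Rightarrow>nat). (g1, g(s:=(g s)(t:=Suc (g s t))))"
  let ?dec = "\<lambda>(g1::nat, g::nat\<Rightarrow>nat\<Rightarrow>nat). (g1, g(s:=(g s)(t:=g s t - 1)))"
  have fS: "finite ?S" using finite_G[of d n m] by auto
  have 1: "(\<Sum>\<gamma>\<in>?S. of_nat (snd \<gamma> s t) * qcoef a d n \<gamma>) = (\<Sum>\<gamma>\<in>?T. of_nat (snd \<gamma> s t) * qcoef a d n \<gamma>)"
    by (rule sum.mono_neutral_right[OF fS]) auto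
  have 2: "(\<Sum>\<gamma>\<in>?S'. a t s * qcoef a d n \<gamma>) = (\<Sum>\<gamma>\<in>?T. of_nat (snd \<gamma> s t) * qcoef a d n \<gamma>)"
  proof (rule sum.reindex_bij_witness[where i="?dec" and j="?inc"])
    fix x assume "x \<in> ?S'"
    then obtain g1 g where x: "x = (g1,g)" "wt d n g1 g = m - t"
      "\<forall>s j. (s \<notin> {2..d} \<or> j \<notin> {2..n}) \<longrightarrow> g s j = 0"
      "qexp d n (g1,g) = \<beta> - Poly_Mapping.single s 1"
      by (cases x) (auto simp: Gset_iff)
    show "?dec (?inc x) = x" using x(1) by auto
    have "wt d n g1 (g(s:=(g s)(t:=g s t + 1))) = m" using wt_inc[OF s t, where k=g1 and g=g] x(2) tm by simp
    moreover have "qexp d n (g1, g(s:=(g s)(t:=g s t + 1))) = \<beta>"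
    proof (rule poly_mapping_eqI)
      fix i
      have "Poly_Mapping.lookup (qexp d n (g1, g(s:=(g s)(t:=g s t + 1)))) i
          = Poly_Mapping.lookup (qexp d n (g1, g)) i + (if i = s then 1 else 0)" by (rule qexp_inc[OF s t])
      also have "\<dots> = Poly_Mapping.lookup \<beta> i" unfolding x(4) lm using bs by auto
      finally show "Poly_Mapping.lookup (qexp d n (g1, g(s:=(g s)(t:=g s t + 1)))) i = Poly_Mapping.lookup \<beta> i" .
    qed
    moreover have "\<forall>s' j. (s' \<notin> {2..d} \<or> j \<notin> {2..n}) \<longrightarrow> (g(s:=(g s)(t:=g s t + 1))) s' j = 0"
      using x(3) s t by auto
    ultimately show "?inc x \<in> ?T" using x(1) by (simp add: Gset_iff)
    show "of_nat (snd (?inc x) s t) * qcoef a d n (?inc x) = a t s * qcoef a d n x"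
    proof -
      have i1: "?inc x = (g1, g(s:=(g s)(t:=Suc (g s t))))" using x(1) by simp
      have i2: "snd (g1, g(s:=(g s)(t:=Suc (g s t)))) s t = Suc (g s t)" by simp
      show ?thesis unfolding x(1) prod.case snd_conv fun_upd_same by (rule coef2[OF s t])
    qed
  next
    fix x assume "x \<in> ?T"
    then obtain g1 g where x: "x = (g1,g)" "wt d n g1 g = m"
      "\<forall>s j. (s \<notin> {2..d} \<or> j \<notin> {2..n}) \<longrightarrow> g s j = 0"
      "qexp d n (g1,g) = \<beta>" "0 < g s t"
      by (cases x) (auto simp: Gset_iff)
    let ?g' = "g(s:=(g s)(t:=g s t - 1))"
    have gg: "g = ?g'(s:=(?g' s)(t:=?g' s t + 1))" using x(5) by auto
    show "?inc (?dec x) = x" using x(1) x(5) by auto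
    have "wt d n g1 g = wt d n g1 ?g' + t" by (subst gg, rule wt_inc[OF s t])
    then have w: "wt d n g1 ?g' = m - t" using x(2) by simp
    have q: "qexp d n (g1, ?g') = \<beta> - Poly_Mapping.single s 1"
    proof (rule poly_mapping_eqI)
      fix i
      have "Poly_Mapping.lookup (qexp d n (g1, g)) i
          = Poly_Mapping.lookup (qexp d n (g1, ?g')) i + (if i = s then 1 else 0)"
        by (subst gg, rule qexp_inc[OF s t])
      then have h: "Poly_Mapping.lookup \<beta> i = Poly_Mapping.lookup (qexp d n (g1, ?g')) i + (if i = s then 1 else 0)"
        unfolding x(4) .
      show "Poly_Mapping.lookup (qexp d n (g1, ?g')) i = Poly_Mapping.lookup (\<beta> - Poly_Mapping.single s 1) i"
        unfolding lm h by simp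
    qed
    have z: "\<forall>s' j. (s' \<notin> {2..d} \<or> j \<notin> {2..n}) \<longrightarrow> ?g' s' j = 0"
      using x(3) s t by auto
    have "(g1, ?g') \<in> Gset d n (m - t)" unfolding Gset_iff using w z by blast
    then have "(g1, ?g') \<in> ?S'" using q by blast
    moreover have "?dec x = (g1, ?g')" using x(1) by simp
    ultimately show "?dec x \<in> ?S'" by simp
  qed
  show ?thesis using 1 2 by (simp add: qstar_def sum_distrib_left)
qed

lemma W_ge:
  assumes "(g1, g) \<in> Gset d n m" "0 < g s j"
  shows "g1 + 2 \<le> m"
proof -
  have sj: "s \<in> {2..d}" "j \<in> {2..n}" using assms unfolding Gset_iff by (metis neq0_conv)+
  have e: "wt d n g1 g = m" using assms(1) by (simp add: Gset_iff)
  have "2 \<le> j * g s j" using sj assms(2)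
    by (metis atLeastAtMost_iff le_trans less_one mult.right_neutral mult_le_mono2 not_le)
  also have "j * g s j \<le> j * (\<Sum>s\<in>{2..d}. g s j)" using sj by (intro mult_le_mono2 member_le_sum) auto
  also have "\<dots> \<le> (\<Sum>j\<in>{2..n}. j * (\<Sum>s\<in>{2..d}. g s j))"
    using sj(2) by (intro member_le_sum[where f="\<lambda>j. j * (\<Sum>s\<in>{2..d}. g s j)"]) auto
  finally show ?thesis using e by (simp add: wt_def)
qed

lemma Gset_small:
  assumes "m \<le> 1"
  shows "Gset d n m = {(m, \<lambda>_ _. 0)}"
proof
  show "Gset d n m \<subseteq> {(m, \<lambda>_ _. 0)}"
  proof
    fix x assume x: "x \<in> Gset d n m"
    obtain g1 g where xe: "x = (g1, g)" by (cases x)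
    have g0: "g = (\<lambda>_ _. 0)"
    proof (rule ccontr)
      assume "g \<noteq> (\<lambda>_ _. 0)"
      then obtain s j where "g s j \<noteq> 0" by metis
      then have "g1 + 2 \<le> m" using W_ge[of g1 g d n m s j] x xe by simp
      then show False using assms by simp
    qed
    have "wt d n g1 g = m" using x xe by (simp add: Gset_iff)
    then have "g1 = m" using g0 by (simp add: wt_def)
    then show "x \<in> {(m, \<lambda>_ _. 0)}" using xe g0 by simp
  qed
next
  show "{(m, \<lambda>_ _. 0)} \<subseteq> Gset d n m" by (simp add: Gset_iff wt_def)
qed

lemma qstar_small:
  fixes a :: "nat \<Rightarrow> nat \<Rightarrow> 'a::field_char_0"
  assumes "m \<le> 1"
  shows "qstar a d n m = (\<lambda>\<beta>. if \<beta> = Poly_Mapping.single 1 m then 1 else 0)"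
proof
  fix \<beta>
  have qe: "qexp d n (m, \<lambda>_ _. 0) = Poly_Mapping.single 1 m"
    by (simp add: qexp_def)
  have qc: "qcoef a d n (m, \<lambda>_ _. 0) = 1"
    using assms by (cases m) (auto simp: qcoef_def)
  show "qstar a d n m \<beta> = (if \<beta> = Poly_Mapping.single 1 m then 1 else 0)"
  proof -
    have se: "{\<gamma> \<in> {(m, \<lambda>_ _. 0)}. qexp d n \<gamma> = \<beta>} = (if \<beta> = Poly_Mapping.single 1 m then {(m, \<lambda>_ _. 0)} else {})"
      using qe by auto
    show ?thesis unfolding qstar_def Gset_small[OF assms] se using qc by simp
  qed
qed

lemma bad_zero:
  assumes "0 < Poly_Mapping.lookup \<beta> i" "i \<notin> {1..d}" "1 \<le> d"
  shows "qstar a d n k \<beta> = 0"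
proof -
  have E: "{\<gamma> \<in> Gset d n k. qexp d n \<gamma> = \<beta>} = {}"
  proof (rule ccontr)
    assume "{\<gamma> \<in> Gset d n k. qexp d n \<gamma> = \<beta>} \<noteq> {}"
    then obtain g1 g where q: "qexp d n (g1, g) = \<beta>" by auto
    have "Poly_Mapping.lookup \<beta> i = 0" unfolding q[symmetric] lookup_qexp using assms(2,3) by auto
    then show False using assms(1) by simp
  qed
  show ?thesis unfolding qstar_def by (simp only: E sum.empty)
qed

lemma zero_zero:
  assumes "1 \<le> k"
  shows "qstar a d n k 0 = 0"
proof -
  have E: "{\<gamma> \<in> Gset d n k. qexp d n \<gamma> = 0} = {}"
  proof (rule ccontr)
    assume "{\<gamma> \<in> Gset d n k. qexp d n \<gamma> = 0} \<noteq> {}"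
    then obtain g1 g where G: "(g1, g) \<in> Gset d n k" and q: "qexp d n (g1, g) = 0" by auto
    have l: "Poly_Mapping.lookup (qexp d n (g1, g)) i = 0" for i using q by simp
    have "g1 = 0" using l[of 1] by (simp add: lookup_qexp)
    have g0: "g s j = 0" for s j
    proof (cases "s \<in> {2..d} \<and> j \<in> {2..n}")
      case True
      then have "(\<Sum>j\<in>{2..n}. g s j) = 0" using l[of s] by (simp add: lookup_qexp)
      then show ?thesis using True by simp
    next
      case False then show ?thesis using G by (auto simp: Gset_iff)
    qed
    have "wt d n g1 g = k" using G by (simp add: Gset_iff)
    then show False using g0 \<open>g1 = 0\<close> assms by (simp add: wt_def)
  qed
  show ?thesis unfolding qstar_def by (simp only: E sum.empty)
qed

lemma id2:
  fixes a :: "nat \<Rightarrow> nat \<Rightarrow> 'a::field_char_0"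
  assumes s: "s \<in> {2..d}" and bs: "0 < Poly_Mapping.lookup \<beta> s" and mn: "m \<le> n"
  shows "of_nat (Poly_Mapping.lookup \<beta> s) * qstar a d n m \<beta>
       = (\<Sum>t\<in>{2..m}. a t s * qstar a d n (m-t) (\<beta> - Poly_Mapping.single s 1))"
proof -
  let ?S = "{\<gamma> \<in> Gset d n m. qexp d n \<gamma> = \<beta>}"
  let ?f = "\<lambda>t. (\<Sum>\<gamma>\<in>?S. of_nat (snd \<gamma> s t) * qcoef a d n \<gamma>)"
  have bsum: "Poly_Mapping.lookup \<beta> s = (\<Sum>t\<in>{2..n}. snd \<gamma> s t)" if "\<gamma> \<in> ?S" for \<gamma>
  proof -
    obtain g1 g where ge: "\<gamma> = (g1, g)" by (cases \<gamma>)
    then have q: "qexp d n (g1, g) = \<beta>" using that by simp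
    show ?thesis unfolding q[symmetric] lookup_qexp ge using s by auto
  qed
  have "of_nat (Poly_Mapping.lookup \<beta> s) * qstar a d n m \<beta>
      = (\<Sum>\<gamma>\<in>?S. of_nat (Poly_Mapping.lookup \<beta> s) * qcoef a d n \<gamma>)"
    by (simp add: qstar_def sum_distrib_left)
  also have "\<dots> = (\<Sum>\<gamma>\<in>?S. \<Sum>t\<in>{2..n}. of_nat (snd \<gamma> s t) * qcoef a d n \<gamma>)"
    by (rule sum.cong[OF refl]) (simp add: bsum sum_distrib_right)
  also have "\<dots> = (\<Sum>t\<in>{2..n}. ?f t)" by (rule sum.swap)
  also have "\<dots> = (\<Sum>t\<in>{2..m}. a t s * qstar a d n (m-t) (\<beta> - Poly_Mapping.single s 1))"
  proof (rule sum.mono_neutral_cong_right)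
    show "{2..m} \<subseteq> {2..n}" using mn by auto
    show "\<forall>t\<in>{2..n} - {2..m}. ?f t = 0"
    proof
      fix t assume t: "t \<in> {2..n} - {2..m}"
      have "snd \<gamma> s t = 0" if "\<gamma> \<in> ?S" for \<gamma>
      proof -
        obtain g1 g where ge: "\<gamma> = (g1, g)" by (cases \<gamma>)
        have "t * g s t \<le> m" using wt_ge[of g1 g d n m s t] that ge s t by auto
        then show ?thesis using t ge by (cases "g s t") auto
      qed
      then show "?f t = 0" by simp
    qed
    show "?f t = a t s * qstar a d n (m-t) (\<beta> - Poly_Mapping.single s 1)" if t: "t \<in> {2..m}" for t
    proof -
      have t': "t \<in> {2..n}" using t mn by auto
      show ?thesis using id2t[OF s t' bs, where a=a] t by auto
    qed
  qed simp
  finally show ?thesis .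
qed

lemma Lseq_len: "length (Lseq a d k) = Suc k" by (induction k) auto

lemma Lseq_nth: "i \<le> k \<Longrightarrow> Lseq a d k ! i = Lpoly a d i"
proof (induction k arbitrary: i)
  case 0 then show ?case by (simp add: Lpoly_def)
next
  case (Suc k)
  show ?case
  proof (cases "i \<le> k")
    case True
    then have "Lseq a d (Suc k) ! i = Lseq a d k ! i" by (simp add: nth_append Lseq_len)
    then show ?thesis using Suc True by simp
  next
    case False then have "i = Suc k" using Suc by simp
    then show ?thesis by (simp add: Lpoly_def)
  qed
qed

lemma Lpoly_0: "Lpoly a d 0 = pconst 1" by (simp add: Lpoly_def)
lemma Lpoly_1: "Lpoly a d 1 = pvar 1" by (simp add: Lpoly_def)
lemma Lpoly_step: "1 \<le> k \<Longrightarrow> Lpoly a d (Suc k) = Lstep a d (Suc k) (Lseq a d k)"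
  by (simp add: Lpoly_def nth_append Lseq_len)

lemma sub_single_zero:
  assumes "0 < Poly_Mapping.lookup \<beta> s"
  shows "(\<beta> - Poly_Mapping.single s 1 = 0) \<longleftrightarrow> (\<beta> = Poly_Mapping.single s (1::nat))"
proof
  assume h: "\<beta> - Poly_Mapping.single s 1 = 0"
  have l: "Poly_Mapping.lookup \<beta> i - (if i = s then 1 else 0) = 0" for i
    using arg_cong[OF h, of "\<lambda>p. Poly_Mapping.lookup p i"] by (simp only: lm lookup_zero)
  show "\<beta> = Poly_Mapping.single s 1"
  proof (rule poly_mapping_eqI)
    fix i show "Poly_Mapping.lookup \<beta> i = Poly_Mapping.lookup (Poly_Mapping.single s 1) i"
      using l[of i] assms by (cases "i = s") (auto simp: lookup_single)
  qed
next
  assume "\<beta> = Poly_Mapping.single s (1::nat)"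
  then show "\<beta> - Poly_Mapping.single s 1 = 0" by simp
qed

lemma step:
  fixes a :: "nat \<Rightarrow> nat \<Rightarrow> 'a::field_char_0"
  assumes d2: "2 \<le> d" and m2: "2 \<le> m" and mn: "m \<le> n"
    and Ls: "\<And>i. i \<le> m - 1 \<Longrightarrow> Ls ! i = qstar a d n i"
  shows "Lstep a d m Ls \<beta> = qstar a d n m \<beta>"
proof -
  let ?Q = "qstar a d n"
  let ?M = "\<lambda>j. Mpoly a m j Ls"
  let ?e = "\<lambda>j. Poly_Mapping.single j (1::nat)"
  have Q0: "?Q 0 = (\<lambda>\<beta>. if \<beta> = 0 then 1 else 0)"
    using qstar_small[of 0 a d n] by simp
  have M1: "?M 1 = ?Q (m-1)" by (simp add: Mpoly_def Ls)
  have Mj: "?M j = (\<lambda>\<alpha>. \<Sum>t\<in>{2..m-1}. a t j * ?Q (m-t) \<alpha>)" if "j \<noteq> 1" for j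
  proof -
    have h: "Ls ! (m-t) = ?Q (m-t)" if "t \<in> {2..m-1}" for t using that by (intro Ls) auto
    show ?thesis unfolding Mpoly_def using that by (intro ext) (simp add: h)
  qed
  have Mbad: "?M j \<alpha> = 0" if "0 < Poly_Mapping.lookup \<alpha> i" "i \<notin> {1..d}" for j \<alpha> i
  proof -
    have z: "?Q k \<alpha> = 0" for k using bad_zero[OF that] d2 by simp
    show ?thesis
    proof (cases "j = 1")
      case True then show ?thesis using z M1 by simp
    next
      case False then show ?thesis using Mj[OF False] by (simp add: z)
    qed
  qed
  have L: "Lstep a d m Ls \<beta> = (\<Sum>j\<in>{1..d}. Psi j (restr j (?M j)) \<beta>) + (\<Sum>j\<in>{2..d}. a m j * pvar j \<beta>)"
    by (simp add: Lstep_def)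
  show ?thesis
  proof (cases "\<exists>i. 0 < Poly_Mapping.lookup \<beta> i \<and> i \<notin> {1..d}")
    case True
    then obtain i where i: "0 < Poly_Mapping.lookup \<beta> i" "i \<notin> {1..d}" by blast
    have "Psi j (restr j (?M j)) \<beta> = 0" if j: "j \<in> {1..d}" for j
    proof -
      have "0 < Poly_Mapping.lookup (\<beta> - ?e j) i" using i j by (auto simp: lm)
      then have "?M j (\<beta> - ?e j) = 0" using Mbad i(2) by blast
      then show ?thesis by (simp add: Psi_def restr_def)
    qed
    moreover have "pvar j \<beta> = (0::'a)" if j: "j \<in> {2..d}" for j
    proof -
      have "\<beta> \<noteq> ?e j" using i j by (auto simp: lookup_single)
      then show ?thesis by (simp add: pvar_def)
    qed
    ultimately have "Lstep a d m Ls \<beta> = 0" unfolding L by simp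
    then show ?thesis using bad_zero[OF i] d2 by simp
  next
    case False
    then have good: "\<And>i. 0 < Poly_Mapping.lookup \<beta> i \<Longrightarrow> i \<in> {1..d}" by blast
    show ?thesis
    proof (cases "\<beta> = 0")
      case True
      have "pvar j \<beta> = (0::'a)" for j
      proof -
        have "\<beta> \<noteq> ?e j"
        proof
          assume "\<beta> = ?e j"
          then have "Poly_Mapping.lookup \<beta> j = 1" by simp
          then show False using True by simp
        qed
        then show ?thesis by (simp add: pvar_def)
      qed
      then have "Lstep a d m Ls \<beta> = 0" unfolding L using True by (simp add: Psi_def)
      then show ?thesis using zero_zero[of m] m2 True by simp
    next
      case False
      then have ex: "\<exists>i. 0 < Poly_Mapping.lookup \<beta> i"
        using poly_mapping_eqI[of \<beta> 0] by (metis lookup_zero neq0_conv)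
      define j0 where "j0 = (LEAST i. 0 < Poly_Mapping.lookup \<beta> i)"
      have j0p: "0 < Poly_Mapping.lookup \<beta> j0" unfolding j0_def using ex by (rule LeastI_ex)
      have j0m: "Poly_Mapping.lookup \<beta> i = 0" if "i < j0" for i
        using not_less_Least[of i "\<lambda>i. 0 < Poly_Mapping.lookup \<beta> i"] that unfolding j0_def by simp
      have j0d: "j0 \<in> {1..d}" using good[OF j0p] .
      have others: "Psi j (restr j (?M j)) \<beta> = 0" if j: "j \<in> {1..d} - {j0}" for j
      proof (cases "Poly_Mapping.lookup \<beta> j = 0")
        case True then show ?thesis by (simp add: Psi_def)
      next
        case False
        have "\<not> j < j0"
        proof
          assume "j < j0"
          then have "Poly_Mapping.lookup \<beta> j = 0" by (rule j0m)
          with False show False by simp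
        qed
        then have jj: "j0 < j" using j by auto
        have nr: "\<not> (\<forall>i\<in>{1..<j}. Poly_Mapping.lookup (\<beta> - ?e j) i = 0)"
        proof
          assume H: "\<forall>i\<in>{1..<j}. Poly_Mapping.lookup (\<beta> - ?e j) i = 0"
          have "j0 \<in> {1..<j}" using j0d jj by simp
          then have "Poly_Mapping.lookup (\<beta> - ?e j) j0 = 0" using H by blast
          moreover have "Poly_Mapping.lookup (\<beta> - ?e j) j0 = Poly_Mapping.lookup \<beta> j0"
            using jj by (simp add: lm)
          ultimately show False using j0p by simp
        qed
        have "restr j (?M j) (\<beta> - ?e j) = 0" unfolding restr_def by (rule if_not_P[OF nr])
        then show ?thesis by (simp add: Psi_def)
      qed
      have psum: "(\<Sum>j\<in>{1..d}. Psi j (restr j (?M j)) \<beta>) = Psi j0 (restr j0 (?M j0)) \<beta>"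
      proof -
        have "(\<Sum>j\<in>{1..d}. Psi j (restr j (?M j)) \<beta>) = Psi j0 (restr j0 (?M j0)) \<beta> + (\<Sum>j\<in>{1..d} - {j0}. Psi j (restr j (?M j)) \<beta>)"
          using sum.remove[of "{1..d}" j0 "\<lambda>j. Psi j (restr j (?M j)) \<beta>"] j0d by simp
        also have "(\<Sum>j\<in>{1..d} - {j0}. Psi j (restr j (?M j)) \<beta>) = 0"
          using others by (intro sum.neutral) blast
        finally show ?thesis by simp
      qed
      have pj0: "Psi j0 (restr j0 (?M j0)) \<beta> = ?M j0 (\<beta> - ?e j0) / of_nat (Poly_Mapping.lookup \<beta> j0)"
      proof -
        have "\<forall>i\<in>{1..<j0}. Poly_Mapping.lookup (\<beta> - ?e j0) i = 0"
        proof
          fix i assume "i \<in> {1..<j0}"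
          then show "Poly_Mapping.lookup (\<beta> - ?e j0) i = 0" by (simp add: lm j0m)
        qed
        then have "restr j0 (?M j0) (\<beta> - ?e j0) = ?M j0 (\<beta> - ?e j0)" unfolding restr_def by simp
        then show ?thesis using j0p by (simp add: Psi_def)
      qed
      have bnz: "of_nat (Poly_Mapping.lookup \<beta> j0) \<noteq> (0::'a)" using j0p by simp
      have pv0: "pvar j \<beta> = (0::'a)" if j: "j \<noteq> j0" for j
      proof -
        have "\<beta> \<noteq> ?e j"
        proof
          assume "\<beta> = ?e j"
          then have "Poly_Mapping.lookup \<beta> j0 = Poly_Mapping.lookup (?e j) j0" by simp
          also have "\<dots> = 0" using j by (simp add: lookup_single)
          finally show False using j0p by simp
        qed
        then show ?thesis by (simp add: pvar_def)
      qed
      show ?thesis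
      proof (cases "j0 = 1")
        case True
        have z: "(\<Sum>j\<in>{2..d}. a m j * pvar j \<beta>) = 0"
          by (rule sum.neutral) (use pv0 True in auto)
        have A: "Lstep a d m Ls \<beta> = ?Q (m-1) (\<beta> - ?e j0) / of_nat (Poly_Mapping.lookup \<beta> j0)"
          unfolding L psum pj0 z using True M1 by simp
        have B: "of_nat (Poly_Mapping.lookup \<beta> j0) * ?Q m \<beta> = ?Q (m-1) (\<beta> - ?e j0)"
          using id1[of \<beta> m a d n] j0p True m2 by simp
        have "?Q m \<beta> = ?Q (m-1) (\<beta> - ?e j0) / of_nat (Poly_Mapping.lookup \<beta> j0)"
          using B bnz by (simp add: eq_divide_eq mult.commute)
        then show ?thesis using A by simp
      next
        case False
        let ?s = j0
        have s: "?s \<in> {2..d}" using False j0d by auto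
        have pv: "(\<Sum>j\<in>{2..d}. a m j * pvar j \<beta>) = a m ?s * pvar ?s \<beta>"
        proof -
          have "(\<Sum>j\<in>{2..d}. a m j * pvar j \<beta>) = a m ?s * pvar ?s \<beta> + (\<Sum>j\<in>{2..d} - {?s}. a m j * pvar j \<beta>)"
            using sum.remove[of "{2..d}" ?s "\<lambda>j. a m j * pvar j \<beta>"] s by simp
          also have "(\<Sum>j\<in>{2..d} - {?s}. a m j * pvar j \<beta>) = 0"
            by (rule sum.neutral) (use pv0 in auto)
          finally show ?thesis by simp
        qed
        define X where "X = (\<Sum>t\<in>{2..m-1}. a t ?s * ?Q (m-t) (\<beta> - ?e ?s))"
        define P where "P = (pvar ?s \<beta> :: 'a)"
        define b where "b = (of_nat (Poly_Mapping.lookup \<beta> ?s) :: 'a)"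
        have Ms: "?M ?s (\<beta> - ?e ?s) = X" unfolding X_def using Mj[of ?s] False by simp
        have LHS: "Lstep a d m Ls \<beta> = X / b + a m ?s * P"
          unfolding L psum pj0 pv Ms P_def b_def by simp
        have Q0e: "?Q 0 (\<beta> - ?e ?s) = P"
          unfolding Q0 P_def pvar_def using sub_single_zero[OF j0p] by simp
        have "(\<Sum>t\<in>{2..m}. a t ?s * ?Q (m-t) (\<beta> - ?e ?s)) = X + a m ?s * ?Q 0 (\<beta> - ?e ?s)"
        proof -
          have ins: "{2..m} = insert m {2..m-1}" using m2 by auto
          have nm: "m \<notin> {2..m-1}" using m2 by auto
          show ?thesis unfolding X_def ins sum.insert[OF finite_atLeastAtMost nm] by (simp add: add.commute)
        qed
        then have RHS: "b * ?Q m \<beta> = X + a m ?s * P"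
          using id2[OF s j0p mn, where a=a] Q0e unfolding b_def by simp
        have bnz': "b \<noteq> 0" using bnz unfolding b_def .
        show ?thesis
        proof (cases "P = 0")
          case True
          then have "?Q m \<beta> = X / b" using RHS bnz' by (simp add: eq_divide_eq mult.commute)
          then show ?thesis using LHS True by simp
        next
          case False
          then have "\<beta> = ?e ?s" unfolding P_def pvar_def by (simp split: if_splits)
          then have "b = 1" unfolding b_def by simp
          then show ?thesis using LHS RHS by simp
        qed
      qed
    qed
  qed
qed

theorem proposition4:
  fixes a :: "nat \<Rightarrow> nat \<Rightarrow> 'a::field_char_0" and d n m :: nat
  assumes "d \<ge> 2" and "m \<le> n"
  shows "qstar a d n m = Lpoly a d m"
  using assms(2)
proof (induction m rule: less_induct)
  case (less m)
  show ?case
  proof (cases "m \<le> 1")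
    case True
    show ?thesis
    proof (cases "m = 0")
      case True
      then show ?thesis using qstar_small[of 0 a d n]
        by (auto simp: Lpoly_0 pconst_def)
    next
      case False
      then have "m = 1" using \<open>m \<le> 1\<close> by simp
      have l1: "Lpoly a d (Suc 0) = pvar 1" by (simp add: Lpoly_def)
      show ?thesis using qstar_small[of 1 a d n] \<open>m = 1\<close> l1
        by (auto simp: pvar_def)
    qed
  next
    case False
    then obtain k where k: "m = Suc k" "1 \<le> k" by (cases m) auto
    have "Lpoly a d m = Lstep a d m (Lseq a d k)" using Lpoly_step[OF k(2)] k(1) by simp
    moreover have "Lstep a d m (Lseq a d k) \<beta> = qstar a d n m \<beta>" for \<beta>
    proof (rule step)
      show "2 \<le> d" using assms(1) .
      show "2 \<le> m" using False by simp
      show "m \<le> n" using less.prems .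
      fix i assume "i \<le> m - 1"
      then have "i \<le> k" "i < m" using k by auto
      then show "Lseq a d k ! i = qstar a d n i" using Lseq_nth less.IH less.prems by simp
    qed
    ultimately show ?thesis by auto
  qed
qed

end
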